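(* Consider a population of users $1,\dots,n$ with intervals $[l_i,r_i]$, speech points $p_i\in[l_i,r_i]$, common disutility $b:=b_1=\dots=b_n\ge0$ and common personalization parameter $\lambda:=\lambda_1=\dots=\lambda_n\in[0,1]$, in which compatibility is mutual: for all $i,j$, $p_j\in[l_i,r_i]$ implies $p_i\in[l_j,r_j]$. Then for any initial set of users on the platform and any starvation-free switching order, the platform reaches an equilibrium: there is a time $T$ after which the set of users on the platform never changes (and this set is stable).
   Context: For $\mathcal S\subseteq[n]$, user $i$'s utility is $u_i(\mathcal S)=\sum_{j\in\mathcal S\setminus\{i\}}\big(\mathbf 1[p_j\in[l_i,r_i]]-\lambda b\,\mathbf 1[p_j\notin[l_i,r_i]]\big)$. The platform (with no moderation) starts from some initial set of users; a switching order $\sigma:\mathbb Z_{>0}\to[n]$ is starvation-free if every user appears at infinitely many times. At time $t$, user $\sigma(t)$ is on the platform after step $t$ iff $u_{\sigma(t)}(\mathcal W)\ge0$, where $\mathcal W$ is the current set of users on the platform; all other users keep their status. A set $\mathcal S$ is stable if $u_i(\mathcal S)\ge0$ for all $i\in\mathcal S$ and $u_j(\mathcal S)<0$ for all $j\notin\mathcal S$. *)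

theory Defs
  imports Complex_Main
begin

text \<open>Users are the natural numbers 0,...,n-1 (standing for 1,...,n).
  Each user i has an interval [l i, r i] and a speech point p i.\<close>

definition utility :: "(nat \<Rightarrow> real) \<Rightarrow> (nat \<Rightarrow> real) \<Rightarrow> (nat \<Rightarrow> real) \<Rightarrow> real \<Rightarrow> real
    \<Rightarrow> nat \<Rightarrow> nat set \<Rightarrow> real" where
  "utility l r p lam b i S =
     (\<Sum>j\<in>S - {i}. (if p j \<in> {l i..r i} then 1 else 0)
                     - lam * b * (if p j \<notin> {l i..r i} then 1 else 0))"

fun dyn :: "(nat \<Rightarrow> real) \<Rightarrow> (nat \<Rightarrow> real) \<Rightarrow> (nat \<Rightarrow> real) \<Rightarrow> real \<Rightarrow> real
    \<Rightarrow> nat set \<Rightarrow> (nat \<Rightarrow> nat) \<Rightarrow> nat \<Rightarrow> nat set" where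
  "dyn l r p lam b S0 \<sigma> 0 = S0"
| "dyn l r p lam b S0 \<sigma> (Suc t) =
     (let W = dyn l r p lam b S0 \<sigma> t; i = \<sigma> (Suc t) in
      if utility l r p lam b i W \<ge> 0 then insert i W else W - {i})"

definition starvation_free :: "nat \<Rightarrow> (nat \<Rightarrow> nat) \<Rightarrow> bool" where
  "starvation_free n \<sigma> \<longleftrightarrow> (\<forall>t>0. \<sigma> t < n) \<and> (\<forall>i<n. infinite {t. t > 0 \<and> \<sigma> t = i})"

definition stable :: "nat \<Rightarrow> (nat \<Rightarrow> real) \<Rightarrow> (nat \<Rightarrow> real) \<Rightarrow> (nat \<Rightarrow> real) \<Rightarrow> real \<Rightarrow> real
    \<Rightarrow> nat set \<Rightarrow> bool" where
  "stable n l r p lam b S \<longleftrightarrow>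
     (\<forall>i\<in>S. utility l r p lam b i S \<ge> 0) \<and>
     (\<forall>j\<in>{..<n} - S. utility l r p lam b j S < 0)"

end

theory Submission
  imports Defs
begin

lemma pot_insert:
  fixes w :: "nat \<Rightarrow> nat \<Rightarrow> real"
  assumes "finite S" "i \<notin> S" "\<forall>j\<in>S. w i j = w j i"
  shows "(\<Sum>k\<in>insert i S. \<Sum>j\<in>insert i S - {k}. w k j)
       = (\<Sum>k\<in>S. \<Sum>j\<in>S - {k}. w k j) + 2 * (\<Sum>j\<in>S. w i j)"
proof -
  have "(\<Sum>k\<in>insert i S. \<Sum>j\<in>insert i S - {k}. w k j)
      = (\<Sum>j\<in>insert i S - {i}. w i j) + (\<Sum>k\<in>S. \<Sum>j\<in>insert i S - {k}. w k j)"
    using assms by (simp add: sum.insert)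
  also have "insert i S - {i} = S" using assms by auto
  also have "(\<Sum>k\<in>S. \<Sum>j\<in>insert i S - {k}. w k j) = (\<Sum>k\<in>S. w i k + (\<Sum>j\<in>S - {k}. w k j))"
  proof (rule sum.cong)
    fix k assume k: "k \<in> S"
    have "insert i S - {k} = insert i (S - {k})" using k assms by auto
    then show "(\<Sum>j\<in>insert i S - {k}. w k j) = w i k + (\<Sum>j\<in>S - {k}. w k j)"
      using assms k by (simp add: sum.insert)
  qed simp
  also have "\<dots> = (\<Sum>k\<in>S. w i k) + (\<Sum>k\<in>S. \<Sum>j\<in>S - {k}. w k j)"
    by (simp add: sum.distrib)
  finally show ?thesis by simp
qed

lemma eventually_const:
  fixes f :: "nat \<Rightarrow> 'a::linorder"
  assumes fin: "finite (f ` {T0..})" and mono: "\<And>t. t \<ge> T0 \<Longrightarrow> f t \<le> f (Suc t)"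
  shows "\<exists>T\<ge>T0. \<forall>t\<ge>T. f t = f T"
proof -
  define M where "M = Max (f ` {T0..})"
  have "M \<in> f ` {T0..}" unfolding M_def using fin by (intro Max_in) auto
  then obtain T where T: "T \<ge> T0" "f T = M" by auto
  have "f T \<le> f t" if "t \<ge> T" for t
    using that
  proof (induction t rule: dec_induct)
    case base then show ?case by simp
  next
    case (step m) then show ?case using mono[of m] T(1) by (meson order_trans le_trans)
  qed
  moreover have "f t \<le> M" if "t \<ge> T" for t
    unfolding M_def using fin that T(1) by (intro Max_ge) auto
  ultimately show ?thesis using T by (meson order.antisym order_trans)
qed

theorem proposition13:
  fixes n :: nat and l r p :: "nat \<Rightarrow> real" and b lam :: real
    and S0 :: "nat set" and \<sigma> :: "nat \<Rightarrow> nat"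
  assumes p_in: "\<forall>i<n. l i \<le> p i \<and> p i \<le> r i"
    and b_nonneg: "b \<ge> 0"
    and lam_range: "0 \<le> lam" "lam \<le> 1"
    and mutual: "\<forall>i<n. \<forall>j<n. p j \<in> {l i..r i} \<longrightarrow> p i \<in> {l j..r j}"
    and init: "S0 \<subseteq> {..<n}"
    and sf: "starvation_free n \<sigma>"
  shows "\<exists>T. (\<forall>t\<ge>T. dyn l r p lam b S0 \<sigma> t = dyn l r p lam b S0 \<sigma> T)
             \<and> stable n l r p lam b (dyn l r p lam b S0 \<sigma> T)"
proof -
  define W where "W = dyn l r p lam b S0 \<sigma>"
  define u where "u = utility l r p lam b"
  define w where "w i j = (if p j \<in> {l i..r i} then 1 else 0) - lam * b * (if p j \<notin> {l i..r i} then (1::real) else 0)" for i j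
  have u_w: "u i S = (\<Sum>j\<in>S - {i}. w i j)" for i S
    unfolding u_def utility_def w_def by simp
  have wsym: "w i j = w j i" if "i < n" "j < n" for i j
  proof -
    have "p j \<in> {l i..r i} \<longleftrightarrow> p i \<in> {l j..r j}" using mutual that by blast
    then show ?thesis unfolding w_def by simp
  qed
  define Phi where "Phi S = (\<Sum>k\<in>S. \<Sum>j\<in>S - {k}. w k j)" for S
  have sig: "\<sigma> t < n" if "t > 0" for t using sf that unfolding starvation_free_def by auto
  have Wsub: "W t \<subseteq> {..<n}" for t
  proof (induction t)
    case 0 then show ?case using init by (simp add: W_def)
  next
    case (Suc t) then show ?case using sig[of "Suc t"] by (auto simp: W_def Let_def)
  qed
  have Wfin: "finite (W t)" for t using Wsub[of t] finite_subset by blast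
  have Wstep: "W (Suc t) = (if u (\<sigma> (Suc t)) (W t) \<ge> 0 then insert (\<sigma> (Suc t)) (W t) else W t - {\<sigma> (Suc t)})" for t
    by (simp add: W_def u_def Let_def)
  have PhiI: "Phi (insert i S) = Phi S + 2 * u i S" if "S \<subseteq> {..<n}" "i < n" "i \<notin> S" for i S
  proof -
    have "finite S" using that finite_subset by blast
    moreover have "\<forall>j\<in>S. w i j = w j i" using that wsym by auto
    moreover have "u i S = (\<Sum>j\<in>S. w i j)" using u_w that by simp
    ultimately show ?thesis unfolding Phi_def using pot_insert[of S i w] that by simp
  qed
  have mono1: "Phi (W t) \<le> Phi (W (Suc t))" and strict: "W (Suc t) \<subset> W t \<Longrightarrow> Phi (W t) < Phi (W (Suc t))" for t
  proof -
    let ?i = "\<sigma> (Suc t)"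
    have i: "?i < n" using sig by simp
    have "Phi (W t) \<le> Phi (W (Suc t)) \<and> (W (Suc t) \<subset> W t \<longrightarrow> Phi (W t) < Phi (W (Suc t)))"
    proof (cases "u ?i (W t) \<ge> 0")
      case True
      then have e: "W (Suc t) = insert ?i (W t)" using Wstep by simp
      show ?thesis
      proof (cases "?i \<in> W t")
        case True then show ?thesis using e by (simp add: insert_absorb)
      next
        case False then show ?thesis using e PhiI[OF Wsub i False] \<open>u ?i (W t) \<ge> 0\<close> by auto
      qed
    next
      case False
      then have e: "W (Suc t) = W t - {?i}" using Wstep by simp
      show ?thesis
      proof (cases "?i \<in> W t")
        case False then show ?thesis using e by simp
      next
        case True
        have "W t = insert ?i (W t - {?i})" using True by auto
        moreover have "u ?i (W t - {?i}) = u ?i (W t)" using u_w by simp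
        moreover have "W t - {?i} \<subseteq> {..<n}" using Wsub[of t] by auto
        ultimately have "Phi (W t) = Phi (W t - {?i}) + 2 * u ?i (W t)"
          using PhiI[of "W t - {?i}" ?i] i by simp
        then show ?thesis using e \<open>\<not> u ?i (W t) \<ge> 0\<close> by auto
      qed
    qed
    then show "Phi (W t) \<le> Phi (W (Suc t))" "W (Suc t) \<subset> W t \<Longrightarrow> Phi (W t) < Phi (W (Suc t))" by auto
  qed
  have finW: "finite (W ` A)" for A
    by (rule finite_subset[of _ "Pow {..<n}"]) (use Wsub in auto)
  have "finite ((\<lambda>t. Phi (W t)) ` {0..})"
    using finite_imageI[OF finW[of "{0..}"], of Phi] by (simp add: image_image)
  then obtain T0 where T0: "\<forall>t\<ge>T0. Phi (W t) = Phi (W T0)"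
    using eventually_const[of "\<lambda>t. Phi (W t)" 0] mono1 by auto
  have grow: "W t \<subseteq> W (Suc t)" if "t \<ge> T0" for t
  proof -
    have "Phi (W t) = Phi (W (Suc t))" using T0 that by (metis le_Suc_eq)
    then have "\<not> W (Suc t) \<subset> W t" using strict by force
    then show ?thesis using Wstep[of t] by (auto split: if_splits)
  qed
  have "finite ((\<lambda>t. card (W t)) ` {T0..})"
  proof (rule finite_subset[of _ "{..n}"])
    show "(\<lambda>t. card (W t)) ` {T0..} \<subseteq> {..n}"
    proof
      fix x assume "x \<in> (\<lambda>t. card (W t)) ` {T0..}"
      then obtain t where "x = card (W t)" by auto
      moreover have "card (W t) \<le> card {..<n}" by (rule card_mono) (use Wsub in auto)
      ultimately show "x \<in> {..n}" by simp
    qed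
  qed simp
  moreover have "card (W t) \<le> card (W (Suc t))" if "t \<ge> T0" for t
    using grow[OF that] Wfin card_mono by blast
  ultimately obtain T where T: "T \<ge> T0" "\<forall>t\<ge>T. card (W t) = card (W T)"
    using eventually_const[of "\<lambda>t. card (W t)" T0] by auto
  have sub: "W T \<subseteq> W t" if "t \<ge> T" for t
    using that
  proof (induction t rule: dec_induct)
    case base then show ?case by simp
  next
    case (step m)
    have "W m \<subseteq> W (Suc m)" using grow[of m] T(1) step(1) by simp
    then show ?case using step(3) by (rule order_trans[rotated])
  qed
  have const: "\<forall>t\<ge>T. W t = W T"
  proof (intro allI impI)
    fix t assume "t \<ge> T"
    then have "W T \<subseteq> W t" "card (W t) = card (W T)" using sub[of t] T(2) by blast+
    then show "W t = W T" using Wfin[of t] card_subset_eq[of "W t" "W T"] by simp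
  qed
  have stab: "stable n l r p lam b (W T)"
    unfolding stable_def
  proof (intro conjI ballI)
    fix i assume iW: "i \<in> W T"
    then have "i < n" using Wsub by auto
    then have "infinite {t. t > 0 \<and> \<sigma> t = i}" using sf unfolding starvation_free_def by auto
    then have "\<not> (\<forall>x\<in>{t. t > 0 \<and> \<sigma> t = i}. x \<le> T)"
      using finite_nat_set_iff_bounded_le by blast
    then obtain t where t0: "t \<in> {t. t > 0 \<and> \<sigma> t = i}" "\<not> t \<le> T" by blast
    then have t: "t > T" "\<sigma> t = i" by auto
    obtain s where s1: "t = Suc s" using t(1) by (cases t) auto
    then have s: "t = Suc s" "s \<ge> T" using t(1) by auto
    have e1: "W (Suc s) = W T" using const s(2) le_SucI by blast
    have e2: "W s = W T" using const s(2) by blast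
    have "\<sigma> (Suc s) = i" using t s by simp
    then have "W (Suc s) = (if u i (W T) \<ge> 0 then insert i (W T) else W T - {i})"
      using Wstep[of s] e2 by simp
    then show "utility l r p lam b i (W T) \<ge> 0"
      using e1 iW unfolding u_def by (cases "utility l r p lam b i (W T) \<ge> 0") auto
  next
    fix i assume iW: "i \<in> {..<n} - W T"
    then have "i < n" by auto
    then have "infinite {t. t > 0 \<and> \<sigma> t = i}" using sf unfolding starvation_free_def by auto
    then have "\<not> (\<forall>x\<in>{t. t > 0 \<and> \<sigma> t = i}. x \<le> T)"
      using finite_nat_set_iff_bounded_le by blast
    then obtain t where t0: "t \<in> {t. t > 0 \<and> \<sigma> t = i}" "\<not> t \<le> T" by blast
    then have t: "t > T" "\<sigma> t = i" by auto
    obtain s where s1: "t = Suc s" using t(1) by (cases t) auto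
    then have s: "t = Suc s" "s \<ge> T" using t(1) by auto
    have e1: "W (Suc s) = W T" using const s(2) le_SucI by blast
    have e2: "W s = W T" using const s(2) by blast
    have "\<sigma> (Suc s) = i" using t s by simp
    then have "W (Suc s) = (if u i (W T) \<ge> 0 then insert i (W T) else W T - {i})"
      using Wstep[of s] e2 by simp
    then show "utility l r p lam b i (W T) < 0"
      using e1 iW unfolding u_def by (cases "utility l r p lam b i (W T) \<ge> 0") auto
  qed
  show ?thesis using const stab unfolding W_def by blast
qed

end
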